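(* Let $\boldsymbol{\theta}=(\mu,\sigma,\tau_l,\tau_u)'$ with $\sigma>0$, $\tau_l<\tau_u$, let $n\ge1$ and $k\in\{1,\dots,n\}$. Then $\xi(n,h_l(\boldsymbol{\theta},n),h_u(\boldsymbol{\theta},n),k)=J_{\boldsymbol{\theta}}(p)$ for some $p\in[\frac{k-1}{n},\frac{k}{n}]$.
   Context: $\phi,\Phi$ are the standard normal density and distribution function; $\tau_l^*=(\tau_l-\mu)/\sigma$, $\tau_u^*=(\tau_u-\mu)/\sigma$; $J_{\boldsymbol{\theta}}(p)=\Phi^{-1}(\Phi(\tau_l^* )+p(\Phi(\tau_u^* )-\Phi(\tau_l^* )))$ for $p\in[0,1]$; $h_l(\boldsymbol{\theta},n)=n\Phi(\tau_l^* )/(\Phi(\tau_u^* )-\Phi(\tau_l^* ))$, $h_u(\boldsymbol{\theta},n)=n(1-\Phi(\tau_u^* ))/(\Phi(\tau_u^* )-\Phi(\tau_l^* ))$; for real $a,b\ge 0$, $\xi(n,a,b,k)=\Phi^{-1}(G^{-1}(0.5))$ where $G^{-1}$ is the quantile function of the $\mathrm{Beta}(a+k,\,b+n+1-k)$ distribution. *)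

theory Defs
  imports "HOL-Probability.Probability"
begin

definition Phi :: "real \<Rightarrow> real" where
  "Phi x = cdf (density lborel std_normal_density) x"

definition quantile :: "(real \<Rightarrow> real) \<Rightarrow> real \<Rightarrow> real" where
  "quantile F q = Inf {x. q \<le> F x}"

definition Phi_inv :: "real \<Rightarrow> real" where
  "Phi_inv p = quantile Phi p"

definition beta_density :: "real \<Rightarrow> real \<Rightarrow> real \<Rightarrow> real" where
  "beta_density a b t =
     (if 0 < t \<and> t < 1 then t powr (a - 1) * (1 - t) powr (b - 1) / Beta a b else 0)"

definition beta_cdf :: "real \<Rightarrow> real \<Rightarrow> real \<Rightarrow> real" where
  "beta_cdf a b x = cdf (density lborel (beta_density a b)) x"

definition J :: "real \<Rightarrow> real \<Rightarrow> real \<Rightarrow> real \<Rightarrow> real \<Rightarrow> real" where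
  "J \<mu> \<sigma> \<tau>l \<tau>u p =
     Phi_inv (Phi ((\<tau>l - \<mu>) / \<sigma>) + p * (Phi ((\<tau>u - \<mu>) / \<sigma>) - Phi ((\<tau>l - \<mu>) / \<sigma>)))"

definition h_l :: "real \<Rightarrow> real \<Rightarrow> real \<Rightarrow> real \<Rightarrow> nat \<Rightarrow> real" where
  "h_l \<mu> \<sigma> \<tau>l \<tau>u n =
     real n * Phi ((\<tau>l - \<mu>) / \<sigma>) / (Phi ((\<tau>u - \<mu>) / \<sigma>) - Phi ((\<tau>l - \<mu>) / \<sigma>))"

definition h_u :: "real \<Rightarrow> real \<Rightarrow> real \<Rightarrow> real \<Rightarrow> nat \<Rightarrow> real" where
  "h_u \<mu> \<sigma> \<tau>l \<tau>u n =
     real n * (1 - Phi ((\<tau>u - \<mu>) / \<sigma>)) / (Phi ((\<tau>u - \<mu>) / \<sigma>) - Phi ((\<tau>l - \<mu>) / \<sigma>))"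

definition xi :: "nat \<Rightarrow> real \<Rightarrow> real \<Rightarrow> nat \<Rightarrow> real" where
  "xi n a b k = Phi_inv (quantile (beta_cdf (a + real k) (b + real n + 1 - real k)) (1/2))"

end

theory Submission
  imports Defs
begin

definition gb :: "real \<Rightarrow> real \<Rightarrow> real \<Rightarrow> real" where
  "gb p q t = t powr p * (1 - t) powr q"

lemma ln_gb: "0 < t \<Longrightarrow> t < 1 \<Longrightarrow> ln (gb p q t) = p * ln t + q * ln (1 - t)"
  by (simp add: gb_def ln_mult ln_powr)

lemma gb_pos: "0 < t \<Longrightarrow> t < 1 \<Longrightarrow> gb p q t > 0"
  by (simp add: gb_def)

lemma reflect_alg:
  fixes p q z :: real
  assumes "p > 0" "q > 0" "p \<le> q + 1" "0 \<le> z" "z < p"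
  shows "q * (q+1) * (p^2 - z^2) \<le> p^2 * ((q+1)^2 - z^2)"
proof -
  have "z^2 \<le> p^2" using assms by (simp add: power_mono)
  have "p^2 \<le> (q+1)^2" using assms by (simp add: power_mono)
  have id: "p^2 * ((q+1)^2 - z^2) - q * (q+1) * (p^2 - z^2) = p^2 * (q+1) - z^2 * (p^2 - q^2 - q)"
    by (simp add: algebra_simps power2_eq_square)
  have "0 \<le> p^2 * (q+1)" using assms by simp
  have "z^2 * (p^2 - q^2 - q) \<le> p^2 * (q+1)"
  proof (cases "p^2 - q^2 - q \<le> 0")
    case True
    have "z^2 * (p^2 - q^2 - q) \<le> 0" using True by (simp add: mult_nonneg_nonpos)
    then show ?thesis using \<open>0 \<le> p^2 * (q+1)\<close> by linarith
  next
    case False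
    have "z^2 * (p^2 - q^2 - q) \<le> p^2 * (p^2 - q^2 - q)"
      using False \<open>z^2 \<le> p^2\<close> by (intro mult_right_mono) auto
    also have "\<dots> \<le> p^2 * (q + 1)" using \<open>p^2 \<le> (q+1)^2\<close>
      by (intro mult_left_mono) (auto simp: power2_eq_square algebra_simps)
    finally show ?thesis .
  qed
  then show ?thesis using id by linarith
qed

lemma reflect_deriv:
  fixes p q y :: real
  assumes "p > 0" "q > 0" "p \<le> q + 1" "0 \<le> y" "y < p / (p+q+1)"
  shows "q / (1 - p/(p+q+1) - y) + q / (1 - p/(p+q+1) + y)
         \<le> p / (p/(p+q+1) + y) + p / (p/(p+q+1) - y)"
proof -
  define N where "N = p + q + 1"
  define z where "z = N * y"
  have N: "N > 0" using assms by (simp add: N_def)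
  have z0: "0 \<le> z" using assms N by (simp add: z_def)
  have zp: "z < p" using assms N by (simp add: z_def N_def field_simps)
  have e1: "p/N + y = (p + z) / N" using N by (simp add: z_def field_simps)
  have e2: "p/N - y = (p - z) / N" using N by (simp add: z_def field_simps)
  have e3: "1 - p/N - y = (q + 1 - z) / N" using N by (simp add: z_def N_def field_simps)
  have e4: "1 - p/N + y = (q + 1 + z) / N" using N by (simp add: z_def N_def field_simps)
  have pz1: "p - z > 0" "p + z > 0" "q + 1 - z > 0" "q + 1 + z > 0" using zp z0 assms by auto
  have lhs: "q / ((q + 1 - z) / N) + q / ((q + 1 + z) / N) = N * (2 * q * (q+1)) / ((q+1)^2 - z^2)"
    using pz1 N by (simp add: field_simps power2_eq_square)
  have rhs: "p / ((p + z) / N) + p / ((p - z) / N) = N * (2 * p^2) / (p^2 - z^2)"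
    using pz1 N by (simp add: field_simps power2_eq_square)
  have f1: "(q+1)^2 - z^2 = (q+1-z)*(q+1+z)" by (simp add: algebra_simps power2_eq_square)
  have d1: "(q+1)^2 - z^2 > 0" unfolding f1 using pz1 by simp
  have f2: "p^2 - z^2 = (p-z)*(p+z)" by (simp add: algebra_simps power2_eq_square)
  have d2: "p^2 - z^2 > 0" unfolding f2 using pz1 by simp
  have "q * (q+1) * (p^2 - z^2) \<le> p^2 * ((q+1)^2 - z^2)"
    using reflect_alg[OF assms(1-3) z0 zp] .
  then have "(2 * q * (q+1)) / ((q+1)^2 - z^2) \<le> (2 * p^2) / (p^2 - z^2)"
    using d1 d2 by (simp add: divide_simps)
  then have "N * (2 * q * (q+1)) / ((q+1)^2 - z^2) \<le> N * (2 * p^2) / (p^2 - z^2)"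
    using N by (simp add: mult_left_mono times_divide_eq_right[symmetric] del: times_divide_eq_right)
  then show ?thesis
    using lhs rhs e1 e2 e3 e4 by (simp add: N_def)
qed

lemma reflect_ineq:
  fixes p q x :: real
  assumes "p > 0" "q > 0" "p \<le> q + 1" "0 < x" "x < p / (p+q+1)"
  shows "gb p q (p/(p+q+1) - x) \<le> gb p q (p/(p+q+1) + x)"
proof -
  define L where "L = p/(p+q+1)"
  have L0: "L > 0" using assms by (simp add: L_def)
  have L2: "2 * L \<le> 1" using assms by (simp add: L_def field_simps)
  have xL: "x < L" using assms by (simp add: L_def)
  define D where "D y = p * ln (L + y) + q * ln (1 - L - y) - p * ln (L - y) - q * ln (1 - L + y)" for y
  have "D 0 \<le> D x"
  proof (rule DERIV_nonneg_imp_increasing_open[of 0 x D])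
    show "0 \<le> x" using assms by simp
  next
    fix y assume y: "0 < y" "y < x"
    have pos: "L + y > 0" "1 - L - y > 0" "L - y > 0" "1 - L + y > 0" using y xL L0 L2 by auto
    have "(D has_real_derivative (p / (L + y) - q / (1 - L - y) + p / (L - y) - q / (1 - L + y))) (at y)"
    proof -
      have a: "((\<lambda>y. ln (L + y)) has_real_derivative 1 / (L + y)) (at y)"
        using pos by (auto intro!: derivative_eq_intros)
      have b: "((\<lambda>y. ln (1 - L - y)) has_real_derivative - 1 / (1 - L - y)) (at y)"
        using pos by (auto intro!: derivative_eq_intros)
      have c: "((\<lambda>y. ln (L - y)) has_real_derivative - 1 / (L - y)) (at y)"
        using pos by (auto intro!: derivative_eq_intros)
      have d: "((\<lambda>y. ln (1 - L + y)) has_real_derivative 1 / (1 - L + y)) (at y)"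
        using pos by (auto intro!: derivative_eq_intros)
      have "((\<lambda>y. p * ln (L + y) + q * ln (1 - L - y) - p * ln (L - y) - q * ln (1 - L + y))
         has_real_derivative (p * (1 / (L + y)) + q * (- 1 / (1 - L - y)) - p * (- 1 / (L - y)) - q * (1 / (1 - L + y)))) (at y)"
        by (intro DERIV_diff DERIV_add DERIV_cmult a b c d)
      then show ?thesis unfolding D_def by simp
    qed
    moreover have "p / (L + y) - q / (1 - L - y) + p / (L - y) - q / (1 - L + y) \<ge> 0"
      using reflect_deriv[OF assms(1-3), of y] y xL unfolding L_def by simp
    ultimately show "\<exists>d. (D has_real_derivative d) (at y) \<and> 0 \<le> d" by blast
  next
    have "\<forall>y\<in>{0..x}. L + y > 0 \<and> 1 - L - y > 0 \<and> L - y > 0 \<and> 1 - L + y > 0"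
      using xL L0 L2 by auto
    then show "continuous_on {0..x} D"
      unfolding D_def by (auto intro!: continuous_intros)
  qed
  moreover have "D 0 = 0" by (simp add: D_def)
  moreover have "D x = ln (gb p q (L + x)) - ln (gb p q (L - x))"
    using xL L0 L2 assms by (simp add: D_def ln_gb algebra_simps)
  ultimately have "ln (gb p q (L - x)) \<le> ln (gb p q (L + x))" by simp
  moreover have "gb p q (L - x) > 0" "gb p q (L + x) > 0"
    using xL L0 L2 assms by (auto intro!: gb_pos)
  ultimately show ?thesis unfolding L_def by simp
qed

lemma mobius_alg:
  fixes p q t :: real
  assumes "p > 0" "q > 0" "q \<le> p" "0 < t" "t < 1"
  defines "lam \<equiv> p / (q + 1)"
  shows "(p + q + 2) * (lam^2 - 1) * (t * (1 - t)) \<le> (p - q) * (t + lam^2 * (1 - t))"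
proof -
  have lam0: "lam > 0" using assms by (simp add: lam_def)
  have k: "(p - q) * (1 + lam) - (p + q + 2) * (lam - 1) = 2"
  proof -
    have q1: "q + 1 > 0" using assms by simp
    have hl: "lam * (q + 1) = p" using q1 by (simp add: lam_def)
    have "(q + 1) * ((p - q) * (1 + lam) - (p + q + 2) * (lam - 1))
       = (p - q) * (q + 1) + (p - q) * (lam * (q + 1)) - (p + q + 2) * (lam * (q + 1)) + (p + q + 2) * (q + 1)"
      by (simp add: algebra_simps)
    also have "\<dots> = (q + 1) * 2" unfolding hl by (simp add: algebra_simps)
    finally have "(q + 1) * ((p - q) * (1 + lam) - (p + q + 2) * (lam - 1)) = (q + 1) * 2" .
    then show ?thesis using q1 by (metis less_irrefl mult_left_cancel)
  qed
  have k2: "(p - q) * (1 + lam)^2 - (p + q + 2) * (lam^2 - 1) = 2 * (1 + lam)"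
  proof -
    have "(p - q) * (1 + lam)^2 - (p + q + 2) * (lam^2 - 1)
        = (1 + lam) * ((p - q) * (1 + lam) - (p + q + 2) * (lam - 1))"
      by (simp add: algebra_simps power2_eq_square)
    then show ?thesis using k by simp
  qed
  have sq: "t + lam^2 * (1 - t) - (1 + lam)^2 * (t * (1 - t)) = (t - lam * (1 - t))^2"
    by (simp add: algebra_simps power2_eq_square)
  have tt: "t * (1 - t) > 0" using assms by simp
  have "(p + q + 2) * (lam^2 - 1) * (t * (1 - t)) \<le> (p - q) * (1 + lam)^2 * (t * (1 - t))"
    using k2 lam0 tt by (intro mult_right_mono) auto
  also have "\<dots> \<le> (p - q) * (t + lam^2 * (1 - t))"
  proof -
    have "(1 + lam)^2 * (t * (1 - t)) \<le> t + lam^2 * (1 - t)" using sq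
      by (metis diff_ge_0_iff_ge zero_le_power2)
    then show ?thesis using assms
      by (metis mult.assoc mult_left_mono diff_ge_0_iff_ge)
  qed
  finally show ?thesis .
qed

lemma mobius_ineq:
  fixes p q t :: real
  assumes "p > 0" "q > 0" "q \<le> p" "0 < t" "t < p / (p+q+1)"
  defines "lam \<equiv> p / (q + 1)"
  defines "d \<equiv> t + lam^2 * (1 - t)"
  shows "gb p q t \<le> gb p q (lam^2 * (1 - t) / d) * (lam^2 / d^2)"
proof -
  define L where "L = p / (p+q+1)"
  have lam0: "lam > 0" using assms by (simp add: lam_def)
  have L0: "0 < L" "L < 1" using assms by (auto simp: L_def field_simps)
  have tL: "t < L" using assms by (simp add: L_def)
  have t1: "t < 1" using tL L0 by simp
  define dd where "dd s = s + lam^2 * (1 - s)" for s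
  have ddpos: "dd s > 0" if "0 < s" "s < 1" for s
    using that lam0 by (simp add: dd_def add_pos_nonneg)
  define E where "E s = (2*p+2) * ln lam + (p - q) * ln (1 - s) + (q - p) * ln s - (p+q+2) * ln (dd s)" for s
  have "E L \<le> E t"
  proof (rule DERIV_nonpos_imp_decreasing_open[of t L E])
    show "t \<le> L" using tL by simp
  next
    fix y assume y: "t < y" "y < L"
    have y01: "0 < y" "y < 1" using y assms L0 by auto
    have a: "((\<lambda>y. ln (1 - y)) has_real_derivative - 1 / (1 - y)) (at y)"
      using y01 by (auto intro!: derivative_eq_intros)
    have b: "((\<lambda>y. ln y) has_real_derivative 1 / y) (at y)"
      using y01 by (auto intro!: derivative_eq_intros)
    have c: "((\<lambda>y. ln (dd y)) has_real_derivative (1 - lam^2) / dd y) (at y)"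
      using ddpos[OF y01] unfolding dd_def by (auto intro!: derivative_eq_intros)
    have "((\<lambda>y. (2*p+2) * ln lam + (p - q) * ln (1 - y) + (q - p) * ln y - (p+q+2) * ln (dd y))
       has_real_derivative (0 + (p - q) * (- 1 / (1 - y)) + (q - p) * (1 / y) - (p+q+2) * ((1 - lam^2) / dd y))) (at y)"
      by (intro DERIV_diff DERIV_add DERIV_cmult a b c DERIV_const)
    then have dE: "(E has_real_derivative (0 + (p - q) * (- 1 / (1 - y)) + (q - p) * (1 / y) - (p+q+2) * ((1 - lam^2) / dd y))) (at y)"
      unfolding E_def by simp
    have alg: "(p + q + 2) * (lam^2 - 1) * (y * (1 - y)) \<le> (p - q) * dd y"
      using mobius_alg[OF assms(1-3) y01] unfolding lam_def dd_def by simp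
    have "0 + (p - q) * (- 1 / (1 - y)) + (q - p) * (1 / y) - (p+q+2) * ((1 - lam^2) / dd y)
        = ((p + q + 2) * (lam^2 - 1) * (y * (1 - y)) - (p - q) * dd y) / (y * (1 - y) * dd y)"
      using y01 ddpos[OF y01] by (simp add: field_simps)
    also have "\<dots> \<le> 0" using alg y01 ddpos[OF y01]
      by (intro divide_nonpos_pos) auto
    finally show "\<exists>d. (E has_real_derivative d) (at y) \<and> d \<le> 0" using dE by blast
  next
    have "\<forall>y\<in>{t..L}. 0 < y \<and> y < 1 \<and> dd y > 0" using assms tL L0 ddpos by force
    then show "continuous_on {t..L} E"
      unfolding E_def dd_def by (auto intro!: continuous_intros)
  qed
  moreover have "E L = 0"
  proof -
    have hl: "lam * (q + 1) = p" using assms by (simp add: lam_def)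
    have hL: "L * (p + q + 1) = p" using assms by (simp add: L_def)
    have "(q + 1) * ((1 - L) * lam - L) = lam * (q + 1) - L * (p + q + 1) + L * p - L * (lam * (q + 1))"
      by (simp add: algebra_simps)
    also have "\<dots> = 0" unfolding hl hL by simp
    finally have "(1 - L) * lam = L" using assms by simp
    then have e1: "1 - L = L / lam" using lam0 by (simp add: field_simps)
    have "(q + 1) * (L * (1 + lam) - lam) = L * (p + q + 1) - L * p + L * (lam * (q + 1)) - lam * (q + 1)"
      by (simp add: algebra_simps)
    also have "\<dots> = 0" unfolding hl hL by simp
    finally have "(q + 1) * (L * (1 + lam) - lam) = 0" .
    then have "L * (1 + lam) = lam" using assms by simp
    then have e2: "dd L = lam" unfolding dd_def e1 using lam0 by (simp add: power2_eq_square algebra_simps)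
    have "E L = (2*p+2) * ln lam + (p - q) * (ln L - ln lam) + (q - p) * ln L - (p+q+2) * ln lam"
      unfolding E_def e1 e2 using L0 lam0 by (simp add: ln_div)
    then show ?thesis by (simp add: algebra_simps)
  qed
  ultimately have E0: "E t \<ge> 0" by simp
  have d0: "d > 0" unfolding d_def using ddpos[OF assms(4) t1] by (simp add: dd_def)
  have phi1: "1 - lam^2 * (1 - t) / d = t / d" using d0 by (simp add: d_def field_simps)
  have phi0: "lam^2 * (1 - t) / d > 0" using d0 lam0 t1 by simp
  have phi01: "lam^2 * (1 - t) / d < 1" using phi1 d0 assms(4) by (smt (verit) divide_pos_pos)
  have "ln (gb p q (lam^2 * (1 - t) / d) * (lam^2 / d^2))
      = ln (gb p q (lam^2 * (1 - t) / d)) + ln (lam^2 / d^2)"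
    by (rule ln_mult_pos) (use phi0 phi01 d0 lam0 in \<open>simp_all add: gb_pos\<close>)
  also have "\<dots> = p * ln (lam^2 * (1 - t) / d) + q * ln (t / d) + ln (lam^2 / d^2)"
    using phi0 phi01 by (simp add: ln_gb phi1)
  also have "\<dots> = (2*p+2) * ln lam + p * ln (1 - t) + q * ln t - (p+q+2) * ln d"
  proof -
    have l0: "ln (lam^2) = 2 * ln lam" using lam0 by (simp add: ln_realpow)
    have l0': "ln (d^2) = 2 * ln d" using d0 by (simp add: ln_realpow)
    have l1: "ln (lam^2 * (1 - t) / d) = 2 * ln lam + ln (1 - t) - ln d"
      using d0 lam0 t1 by (simp add: ln_div ln_mult_pos l0)
    have l2: "ln (t / d) = ln t - ln d" using d0 assms(4) by (simp add: ln_div)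
    have l3: "ln (lam^2 / d^2) = 2 * ln lam - 2 * ln d" using d0 lam0 by (simp add: ln_div l0 l0')
    show ?thesis unfolding l1 l2 l3 by (simp add: algebra_simps)
  qed
  also have "\<dots> = E t + ln (gb p q t)"
    using t1 assms(4) by (simp add: E_def ln_gb dd_def d_def algebra_simps)
  finally have "ln (gb p q t) \<le> ln (gb p q (lam^2 * (1 - t) / d) * (lam^2 / d^2))"
    using E0 by simp
  moreover have "gb p q t > 0" using t1 assms(4) by (simp add: gb_pos)
  moreover have "gb p q (lam^2 * (1 - t) / d) * (lam^2 / d^2) > 0"
    using phi0 phi01 d0 lam0 by (simp add: gb_pos)
  ultimately show ?thesis by simp
qed

lemma gb_nonneg: "0 \<le> gb p q t"
  by (simp add: gb_def)

lemma lam_facts: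
  fixes p q :: real
  assumes "p > 0" "q > 0"
  defines "lam \<equiv> p / (q + 1)" and "L \<equiv> p / (p + q + 1)"
  shows "lam * (1 - L) = L" "L + lam^2 * (1 - L) = lam"
proof -
  have hl: "lam * (q + 1) = p" using assms by (simp add: lam_def)
  have hL: "L * (p + q + 1) = p" using assms by (simp add: L_def)
  have "(q + 1) * ((1 - L) * lam - L) = lam * (q + 1) - L * (p + q + 1) + L * p - L * (lam * (q + 1))"
    by (simp add: algebra_simps)
  also have "\<dots> = 0" unfolding hl hL by simp
  finally show e1: "lam * (1 - L) = L" using assms by (simp add: mult.commute)
  have "(q + 1) * (L * (1 + lam) - lam) = L * (p + q + 1) - L * p + L * (lam * (q + 1)) - lam * (q + 1)"
    by (simp add: algebra_simps)
  also have "\<dots> = 0" unfolding hl hL by simp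
  finally have "L * (1 + lam) = lam" using assms by simp
  note e2 = this
  have "L + lam^2 * (1 - L) = L + lam * (lam * (1 - L))" by (simp add: power2_eq_square)
  also have "\<dots> = L + lam * L" using e1 by simp
  also have "\<dots> = L * (1 + lam)" by (simp add: algebra_simps)
  also have "\<dots> = lam" by (rule e2)
  finally show "L + lam^2 * (1 - L) = lam" .
qed

lemma lemmaA:
  fixes p q :: real and G :: "real \<Rightarrow> real"
  assumes "p > 0" "q > 0" and Gc: "continuous_on {0..1} G"
    and Gd: "\<And>x. 0 < x \<Longrightarrow> x < 1 \<Longrightarrow> (G has_real_derivative gb p q x) (at x)"
  shows "2 * G (p/(p+q+1)) \<le> G 0 + G 1"
proof -
  define L where "L = p/(p+q+1)"
  have L0: "0 < L" "L < 1" using assms by (auto simp: L_def field_simps)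
  show ?thesis
  proof (cases "p \<le> q + 1")
    case True
    have L2: "2 * L \<le> 1" using True assms by (simp add: L_def field_simps)
    define K where "K y = G (L + y) + G (L - y)" for y
    have "K 0 \<le> K L"
    proof (rule DERIV_nonneg_imp_increasing_open[of 0 L K])
      show "0 \<le> L" using L0 by simp
    next
      fix y assume y: "0 < y" "y < L"
      have d1: "((\<lambda>y. G (L + y)) has_real_derivative gb p q (L + y) * (0 + 1)) (at y)"
        by (rule DERIV_chain2[OF Gd]) (use y L2 in \<open>auto intro!: derivative_eq_intros\<close>)
      have d2: "((\<lambda>y. G (L - y)) has_real_derivative gb p q (L - y) * (0 - 1)) (at y)"
        by (rule DERIV_chain2[OF Gd]) (use y L2 in \<open>auto intro!: derivative_eq_intros\<close>)
      have "(K has_real_derivative (gb p q (L + y) * (0 + 1) + gb p q (L - y) * (0 - 1))) (at y)"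
        unfolding K_def by (rule DERIV_add[OF d1 d2])
      moreover have "gb p q (L - y) \<le> gb p q (L + y)"
        using reflect_ineq[OF assms(1,2) True y(1)] y unfolding L_def by simp
      ultimately show "\<exists>d. (K has_real_derivative d) (at y) \<and> 0 \<le> d" by force
    next
      have c1: "continuous_on {0..L} (\<lambda>y. G (L + y))"
        by (rule continuous_on_compose2[OF Gc]) (use L2 in \<open>auto intro!: continuous_intros\<close>)
      have c2: "continuous_on {0..L} (\<lambda>y. G (L - y))"
        by (rule continuous_on_compose2[OF Gc]) (use L2 L0 in \<open>auto intro!: continuous_intros\<close>)
      show "continuous_on {0..L} K" unfolding K_def using c1 c2 by (rule continuous_on_add)
    qed
    then have "2 * G L \<le> G (2 * L) + G 0" by (simp add: K_def)
    moreover have "G (2 * L) \<le> G 1"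
    proof (rule DERIV_nonneg_imp_increasing_open[of "2*L" 1 G])
      show "2 * L \<le> 1" by fact
    next
      fix x assume "2 * L < x" "x < 1"
      then show "\<exists>y. (G has_real_derivative y) (at x) \<and> 0 \<le> y"
        using Gd L0 gb_nonneg by (meson less_trans mult_pos_pos zero_less_numeral)
    next
      show "continuous_on {2*L..1} G" by (rule continuous_on_subset[OF Gc]) (use L0 in auto)
    qed
    ultimately show ?thesis unfolding L_def by simp
  next
    case False
    then have qp: "q \<le> p" by simp
    define lam where "lam = p / (q + 1)"
    have lam0: "lam > 0" using assms by (simp add: lam_def)
    define dd where "dd t = t + lam^2 * (1 - t)" for t
    define mph where "mph t = lam^2 * (1 - t) / dd t" for t
    have ddpos: "dd t > 0" if "0 \<le> t" "t \<le> 1" for t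
    proof (cases "t = 0")
      case True then show ?thesis using lam0 by (simp add: dd_def)
    next
      case False then show ?thesis using that lam0 by (simp add: dd_def add_pos_nonneg)
    qed
    have mph_rng: "0 \<le> mph t \<and> mph t \<le> 1" if "0 \<le> t" "t \<le> 1" for t
      using ddpos[OF that] that lam0 by (auto simp: mph_def dd_def divide_simps)
    have mph_rng2: "0 < mph t \<and> mph t < 1" if "0 < t" "t < 1" for t
      using ddpos[of t] that lam0 by (auto simp: mph_def dd_def divide_simps)
    define H where "H t = G (mph t) + G t" for t
    have "H L \<le> H 0"
    proof (rule DERIV_nonpos_imp_decreasing_open[of 0 L H])
      show "0 \<le> L" using L0 by simp
    next
      fix t assume t: "0 < t" "t < L"
      have t1: "t < 1" using t L0 by simp
      have dphi: "(mph has_real_derivative (- (lam^2 / (dd t)^2))) (at t)"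
      proof -
        have "(mph has_real_derivative (- (lam^2 * dd t) - lam^2 * (1 - t) * (1 - lam^2)) / (dd t)^2) (at t)"
          unfolding mph_def dd_def
          using ddpos[of t] t t1 unfolding dd_def
          by (auto intro!: derivative_eq_intros simp: power2_eq_square)
        moreover have "- (lam^2 * dd t) - lam^2 * (1 - t) * (1 - lam^2) = - (lam^2)"
          by (simp add: dd_def algebra_simps power2_eq_square)
        ultimately show ?thesis by simp
      qed
      have dG: "((\<lambda>t. G (mph t)) has_real_derivative gb p q (mph t) * (- (lam^2 / (dd t)^2))) (at t)"
        by (rule DERIV_chain2[OF Gd dphi]) (use mph_rng2[OF t(1) t1] in auto)
      have "(H has_real_derivative (gb p q (mph t) * (- (lam^2 / (dd t)^2)) + gb p q t)) (at t)"
        unfolding H_def by (rule DERIV_add[OF dG Gd]) (use t t1 in auto)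
      moreover have "gb p q t \<le> gb p q (mph t) * (lam^2 / (dd t)^2)"
        using mobius_ineq[OF assms(1,2) qp t(1)] t unfolding L_def mph_def dd_def lam_def by simp
      ultimately show "\<exists>d. (H has_real_derivative d) (at t) \<and> d \<le> 0"
        by (intro exI[of _ "gb p q (mph t) * (- (lam^2 / (dd t)^2)) + gb p q t"]) auto
    next
      have nz: "\<forall>t\<in>{0..L}. t + lam^2 * (1 - t) \<noteq> 0"
      proof
        fix t assume "t \<in> {0..L}"
        then have "0 \<le> t" "t \<le> 1" using L0 by auto
        then show "t + lam^2 * (1 - t) \<noteq> 0" using ddpos[of t] unfolding dd_def by simp
      qed
      have cphi: "continuous_on {0..L} mph"
        unfolding mph_def dd_def
        by (intro continuous_on_divide continuous_on_mult continuous_on_add continuous_on_diff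
            continuous_on_const continuous_on_id) (use nz in auto)
      have c1: "continuous_on {0..L} (\<lambda>t. G (mph t))"
        by (rule continuous_on_compose2[OF Gc cphi]) (use mph_rng L0 in force)
      have c2: "continuous_on {0..L} G" by (rule continuous_on_subset[OF Gc]) (use L0 in auto)
      show "continuous_on {0..L} H" unfolding H_def using c1 c2 by (rule continuous_on_add)
    qed
    moreover have "mph 0 = 1" using lam0 by (simp add: mph_def dd_def)
    moreover have "mph L = L"
    proof -
      have f1: "lam * (1 - L) = L" and f2: "L + lam^2 * (1 - L) = lam"
        using lam_facts[OF assms(1,2)] unfolding lam_def L_def by auto
      have "mph L = lam * (lam * (1 - L)) / lam" unfolding mph_def dd_def f2
        by (simp add: power2_eq_square)
      also have "\<dots> = L" unfolding f1 using lam0 by simp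
      finally show ?thesis .
    qed
    ultimately show ?thesis unfolding H_def L_def by simp
  qed
qed

lemma lemmaB:
  fixes p q :: real and G :: "real \<Rightarrow> real"
  assumes "p > 0" "q > 0" and Gc: "continuous_on {0..1} G"
    and Gd: "\<And>x. 0 < x \<Longrightarrow> x < 1 \<Longrightarrow> (G has_real_derivative gb p q x) (at x)"
  shows "G 0 + G 1 \<le> 2 * G ((p+1)/(p+q+1))"
proof -
  define G' where "G' x = - G (1 - x)" for x
  have "2 * G' (q/(q+p+1)) \<le> G' 0 + G' 1"
  proof (rule lemmaA[OF assms(2,1)])
    show "continuous_on {0..1} G'" unfolding G'_def
      by (intro continuous_on_minus continuous_on_compose2[OF Gc]) (auto intro!: continuous_intros)
  next
    fix x :: real assume x: "0 < x" "x < 1"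
    have "((\<lambda>x. G (1 - x)) has_real_derivative gb p q (1 - x) * (0 - 1)) (at x)"
      by (rule DERIV_chain2[OF Gd]) (use x in \<open>auto intro!: derivative_eq_intros\<close>)
    then have "(G' has_real_derivative - (gb p q (1 - x) * (0 - 1))) (at x)"
      unfolding G'_def by (rule DERIV_minus)
    moreover have "gb p q (1 - x) = gb q p x" by (simp add: gb_def mult.commute)
    ultimately show "(G' has_real_derivative gb q p x) (at x)" by simp
  qed
  moreover have "1 - q/(q+p+1) = (p+1)/(p+q+1)" using assms by (simp add: field_simps)
  ultimately show ?thesis by (simp add: G'_def)
qed

lemma Beta_pos_real: "a > 0 \<Longrightarrow> b > 0 \<Longrightarrow> Beta a b > (0::real)"
  by (simp add: Beta_def Gamma_real_pos)

lemma gb_cont: "p > 0 \<Longrightarrow> q > 0 \<Longrightarrow> continuous_on {0..1} (gb p q)"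
  unfolding gb_def by (intro continuous_on_mult continuous_on_powr') (auto intro!: continuous_intros)

lemma beta_density_eq:
  "0 \<le> t \<Longrightarrow> t \<le> 1 \<Longrightarrow> a > 1 \<Longrightarrow> b > 1 \<Longrightarrow> beta_density a b t = gb (a-1) (b-1) t / Beta a b"
  by (cases "t = 0 \<or> t = 1") (auto simp: beta_density_def gb_def)

lemma beta_density_out: "t \<le> 0 \<Longrightarrow> beta_density a b t = 0"
  by (simp add: beta_density_def)

lemma beta_cdf_rep:
  fixes a b x :: real
  assumes a: "a > 1" and b: "b > 1" and x: "0 \<le> x" "x \<le> 1"
  shows "beta_cdf a b x = integral {0..x} (\<lambda>t. gb (a-1) (b-1) t / Beta a b)"
proof -
  define f where "f t = gb (a-1) (b-1) t / Beta a b" for t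
  have B: "Beta a b > 0" using a b by (simp add: Beta_pos_real)
  have fc1: "continuous_on {0..1} f"
    unfolding f_def using gb_cont[of "a-1" "b-1"] a b B
    by (intro continuous_on_divide continuous_on_const) auto
  have fc: "continuous_on {0..x} f"
    by (rule continuous_on_subset[OF fc1]) (use x in auto)
  have fi: "(f has_integral integral {0..x} f) {0..x}"
    using integrable_continuous_interval[OF fc] by (simp add: has_integral_integral)
  have I0: "integral {0..x} f \<ge> 0"
    using fi B by (intro has_integral_nonneg[OF fi]) (simp add: f_def gb_nonneg)
  have meas: "(\<lambda>t. ennreal (beta_density a b t)) \<in> borel_measurable lborel"
    unfolding beta_density_def by measurable
  have "emeasure (density lborel (beta_density a b)) {..x}
      = (\<integral>\<^sup>+ t. ennreal (beta_density a b t) * indicator {..x} t \<partial>lborel)"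
    by (rule emeasure_density[OF meas]) simp
  also have "\<dots> = (\<integral>\<^sup>+ t. ennreal (indicator {0..x} t * f t) \<partial>lborel)"
  proof (rule nn_integral_cong)
    fix t :: real
    show "ennreal (beta_density a b t) * indicator {..x} t = ennreal (indicator {0..x} t * f t)"
    proof (cases "t < 0")
      case True then show ?thesis by (simp add: beta_density_out)
    next
      case False
      then show ?thesis using x a b by (auto simp: indicator_def f_def beta_density_eq)
    qed
  qed
  also have "\<dots> = ennreal (integral {0..x} f)"
    by (rule nn_integral_has_integral_lebesgue[OF _ fi]) (use B in \<open>simp add: f_def gb_nonneg\<close>)
  finally have "emeasure (density lborel (beta_density a b)) {..x} = ennreal (integral {0..x} f)" .
  then have "measure (density lborel (beta_density a b)) {..x} = integral {0..x} f"
    unfolding measure_def using I0 by simp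
  then show ?thesis unfolding beta_cdf_def cdf_def f_def by simp
qed

lemma beta_cdf_neg:
  fixes a b x :: real
  assumes "x < 0"
  shows "beta_cdf a b x = 0"
proof -
  have meas: "(\<lambda>t. ennreal (beta_density a b t)) \<in> borel_measurable lborel"
    unfolding beta_density_def by measurable
  have "emeasure (density lborel (beta_density a b)) {..x}
      = (\<integral>\<^sup>+ t. ennreal (beta_density a b t) * indicator {..x} t \<partial>lborel)"
    by (rule emeasure_density[OF meas]) simp
  also have "\<dots> = 0"
  proof -
    have "(\<lambda>t. ennreal (beta_density a b t) * indicator {..x} t) = (\<lambda>t. 0)"
    proof (rule ext)
      fix t show "ennreal (beta_density a b t) * indicator {..x} t = 0"
        using assms by (cases "t \<le> x") (auto simp: indicator_def beta_density_out)
    qed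
    then show ?thesis by simp
  qed
  finally show ?thesis unfolding beta_cdf_def cdf_def measure_def by simp
qed

lemma median_bounds:
  fixes a b :: real
  assumes a: "a > 1" and b: "b > 1"
  shows "(a - 1) / (a + b - 1) \<le> quantile (beta_cdf a b) (1/2)"
    and "quantile (beta_cdf a b) (1/2) \<le> a / (a + b - 1)"
proof -
  define p where "p = a - 1"
  define q where "q = b - 1"
  have p: "p > 0" and q: "q > 0" using a b by (auto simp: p_def q_def)
  define B where "B = Beta a b"
  have B: "B > 0" using a b by (simp add: B_def Beta_pos_real)
  define f where "f t = gb p q t / B" for t
  define G0 where "G0 x = integral {0..x} f" for x
  have fc: "continuous_on {0..1} f"
    unfolding f_def using gb_cont[OF p q] B by (intro continuous_on_divide continuous_on_const) auto
  have F_eq: "beta_cdf a b x = G0 x" if "0 \<le> x" "x \<le> 1" for x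
    using beta_cdf_rep[OF a b that] unfolding G0_def f_def p_def q_def B_def by simp
  have G0w: "(G0 has_real_derivative f x) (at x within {0..1})" if "x \<in> {0..1}" for x
    unfolding G0_def by (rule integral_has_real_derivative[OF fc that])
  have G0c: "continuous_on {0..1} G0"
    using G0w by (meson DERIV_continuous continuous_on_eq_continuous_within)
  have G0d: "(G0 has_real_derivative f x) (at x)" if "0 < x" "x < 1" for x
  proof -
    have "at x within {0..1} = at x" by (rule at_within_interior) (use that in simp)
    then show ?thesis using G0w[of x] that by simp
  qed
  have G00: "G0 0 = 0" by (simp add: G0_def)
  have G01: "G0 1 = 1"
  proof -
    have "(f has_integral Beta a b / B) {0..1}"
      unfolding f_def gb_def p_def q_def using has_integral_Beta_real[of a b] a b
      by (intro has_integral_divide) auto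
    then show ?thesis unfolding G0_def using B by (simp add: B_def integral_unique)
  qed
  define G where "G x = B * G0 x" for x
  have Gc: "continuous_on {0..1} G" unfolding G_def by (intro continuous_on_mult continuous_on_const G0c)
  have Gd: "(G has_real_derivative gb p q x) (at x)" if "0 < x" "x < 1" for x
  proof -
    have "(G has_real_derivative B * f x) (at x)" unfolding G_def by (rule DERIV_cmult[OF G0d[OF that]])
    then show ?thesis using B by (simp add: f_def)
  qed
  define L where "L = (a - 1) / (a + b - 1)"
  define U where "U = a / (a + b - 1)"
  have LpL: "L = p / (p + q + 1)" by (simp add: L_def p_def q_def)
  have UpU: "U = (p + 1) / (p + q + 1)" by (simp add: U_def p_def q_def)
  have L01: "0 < L" "L < 1" using p q by (auto simp: LpL field_simps)
  have U01: "0 < U" "U \<le> 1" using p q by (auto simp: UpU field_simps)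
  have "2 * G L \<le> G 0 + G 1" unfolding LpL by (rule lemmaA[OF p q Gc Gd])
  then have FL: "beta_cdf a b L \<le> 1/2" using B L01 F_eq[of L] by (simp add: G_def G00 G01)
  have "G 0 + G 1 \<le> 2 * G U" unfolding UpU by (rule lemmaB[OF p q Gc Gd])
  then have FU: "1/2 \<le> beta_cdf a b U" using B U01 F_eq[of U] by (simp add: G_def G00 G01)
  define S where "S = {x. 1/2 \<le> beta_cdf a b x}"
  have US: "U \<in> S" using FU by (simp add: S_def)
  have lowS: "L \<le> x" if "x \<in> S" for x
  proof (rule ccontr)
    assume "\<not> L \<le> x"
    then have xL: "x < L" by simp
    show False
    proof (cases "x < 0")
      case True
      then show False using that beta_cdf_neg[OF True, of a b] by (simp add: S_def)
    next
      case False
      have "G0 x < G0 L"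
      proof (rule DERIV_pos_imp_increasing_open[OF xL])
        fix y assume "x < y" "y < L"
        then have y: "0 < y" "y < 1" using False L01 by auto
        then show "\<exists>d. (G0 has_real_derivative d) (at y) \<and> 0 < d"
          using G0d[OF y] gb_pos[OF y] B by (auto simp: f_def)
      next
        show "continuous_on {x..L} G0" by (rule continuous_on_subset[OF G0c]) (use False L01 in auto)
      qed
      then have "beta_cdf a b x < beta_cdf a b L" using F_eq[of x] F_eq[of L] False xL L01 by simp
      then show False using FL that by (simp add: S_def)
    qed
  qed
  have bdd: "bdd_below S" using lowS by (auto simp: bdd_below_def)
  have "L \<le> Inf S" using US lowS by (intro cInf_greatest) auto
  then show "(a - 1) / (a + b - 1) \<le> quantile (beta_cdf a b) (1/2)"
    by (simp add: quantile_def S_def L_def)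
  have "Inf S \<le> U" by (rule cInf_lower[OF US bdd])
  then show "quantile (beta_cdf a b) (1/2) \<le> a / (a + b - 1)"
    by (simp add: quantile_def S_def U_def)
qed

lemma std_normal_rd: "real_distribution (density lborel std_normal_density)"
  unfolding real_distribution_def real_distribution_axioms_def
  using prob_space_normal_density[of 1 0] by simp

lemma Phi_strict:
  fixes x y :: real
  assumes "x < y"
  shows "Phi x < Phi y"
proof -
  define N where "N = density lborel std_normal_density"
  interpret real_distribution N unfolding N_def by (rule std_normal_rd)
  define c where "c = (1 / sqrt (2 * pi)) * exp (- (x^2 + y^2) / 2)"
  have c0: "c > 0" by (simp add: c_def)
  have dens: "c \<le> std_normal_density t" if "x < t" "t \<le> y" for t
  proof -
    have "t^2 \<le> x^2 + y^2"
    proof (cases "t \<ge> 0")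
      case True
      then have "t^2 \<le> y^2" using that by (intro power_mono) auto
      then show ?thesis by (simp add: add_increasing)
    next
      case False
      then have "(-t)^2 \<le> (-x)^2" using that by (intro power_mono) auto
      then show ?thesis by (simp add: add_increasing2)
    qed
    then have "exp (- (x^2 + y^2) / 2) \<le> exp (- (t^2) / 2)" by simp
    then show ?thesis unfolding c_def std_normal_density_def
      by (intro mult_left_mono) auto
  qed
  have "ennreal c * ennreal (y - x) = (\<integral>\<^sup>+ t. ennreal c * indicator {x<..y} t \<partial>lborel)"
    using assms by (simp add: nn_integral_cmult_indicator)
  also have "\<dots> \<le> (\<integral>\<^sup>+ t. ennreal (std_normal_density t) * indicator {x<..y} t \<partial>lborel)"
    by (intro nn_integral_mono) (auto simp: indicator_def dens)
  also have "\<dots> = emeasure N {x<..y}"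
    unfolding N_def by (rule emeasure_density[symmetric]) auto
  also have "\<dots> = ennreal (measure N {x<..y})" by (simp add: emeasure_eq_measure)
  finally have "ennreal c * ennreal (y - x) \<le> ennreal (measure N {x<..y})" .
  moreover have "0 < c * (y - x)" using c0 assms by simp
  moreover have "ennreal c * ennreal (y - x) = ennreal (c * (y - x))"
    using c0 assms by (simp add: ennreal_mult)
  ultimately have "c * (y - x) \<le> measure N {x<..y}"
    by (simp add: ennreal_le_iff)
  then have "0 < measure N {x<..y}" using c0 assms
    by (meson less_le_trans mult_pos_pos diff_gt_0_iff_gt)
  moreover have "Phi y - Phi x = measure N {x<..y}"
    unfolding Phi_def N_def[symmetric] by (rule cdf_diff_eq[OF assms])
  ultimately show ?thesis by simp
qed

lemma Phi_bounds: "0 < Phi x" "Phi x < 1"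
proof -
  define N where "N = density lborel std_normal_density"
  interpret real_distribution N unfolding N_def by (rule std_normal_rd)
  have "0 \<le> Phi (x - 1)" unfolding Phi_def N_def[symmetric] by (rule cdf_nonneg)
  then show "0 < Phi x" using Phi_strict[of "x - 1" x] by simp
  have "Phi (x + 1) \<le> 1" unfolding Phi_def N_def[symmetric] by (rule cdf_bounded_prob)
  then show "Phi x < 1" using Phi_strict[of x "x + 1"] by simp
qed

theorem mainTheorem7:
  fixes \<mu> \<sigma> \<tau>l \<tau>u :: real and n k :: nat
  assumes "\<sigma> > 0" and "\<tau>l < \<tau>u" and "n \<ge> 1" and "1 \<le> k" and "k \<le> n"
  shows "\<exists>p \<in> {(real k - 1) / real n .. real k / real n}.
           xi n (h_l \<mu> \<sigma> \<tau>l \<tau>u n) (h_u \<mu> \<sigma> \<tau>l \<tau>u n) k = J \<mu> \<sigma> \<tau>l \<tau>u p"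
proof -
  define Fl where "Fl = Phi ((\<tau>l - \<mu>) / \<sigma>)"
  define Fu where "Fu = Phi ((\<tau>u - \<mu>) / \<sigma>)"
  define D where "D = Fu - Fl"
  have "(\<tau>l - \<mu>) / \<sigma> < (\<tau>u - \<mu>) / \<sigma>"
    using assms(1,2) by (intro divide_strict_right_mono) auto
  then have D0: "D > 0" unfolding D_def Fl_def Fu_def using Phi_strict by simp
  have Fl0: "Fl > 0" and Fu1: "Fu < 1" unfolding Fl_def Fu_def using Phi_bounds by auto
  have n0: "real n > 0" using assms by simp
  define a where "a = h_l \<mu> \<sigma> \<tau>l \<tau>u n"
  define b where "b = h_u \<mu> \<sigma> \<tau>l \<tau>u n"
  have a_eq: "a = real n * Fl / D" by (simp add: a_def h_l_def Fl_def Fu_def D_def)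
  have b_eq: "b = real n * (1 - Fu) / D" by (simp add: b_def h_u_def Fl_def Fu_def D_def)
  have a0: "a > 0" using a_eq n0 Fl0 D0 by simp
  have b0: "b > 0" using b_eq n0 Fu1 D0 by simp
  define \<alpha> where "\<alpha> = a + real k"
  define \<beta> where "\<beta> = b + real n + 1 - real k"
  have al: "\<alpha> > 1" using a0 assms by (simp add: \<alpha>_def)
  have be: "\<beta> > 1" using b0 assms by (simp add: \<beta>_def)
  define m where "m = quantile (beta_cdf \<alpha> \<beta>) (1/2)"
  have m1: "(\<alpha> - 1) / (\<alpha> + \<beta> - 1) \<le> m" and m2: "m \<le> \<alpha> / (\<alpha> + \<beta> - 1)"
    using median_bounds[OF al be] by (simp_all add: m_def)
  have sum: "\<alpha> + \<beta> - 1 = real n / D"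
  proof -
    have "a + b = real n * (Fl + (1 - Fu)) / D" unfolding a_eq b_eq by (simp add: add_divide_distrib distrib_left)
    also have "Fl + (1 - Fu) = 1 - D" by (simp add: D_def)
    finally have "a + b = real n * (1 - D) / D" .
    then have "a + b + real n = real n / D" using D0 by (simp add: field_simps)
    then show ?thesis by (simp add: \<alpha>_def \<beta>_def)
  qed
  have lo: "(\<alpha> - 1) / (\<alpha> + \<beta> - 1) = Fl + (real k - 1) / real n * D"
    unfolding sum using D0 n0 by (simp add: \<alpha>_def a_eq field_simps)
  have hi: "\<alpha> / (\<alpha> + \<beta> - 1) = Fl + real k / real n * D"
    unfolding sum using D0 n0 by (simp add: \<alpha>_def a_eq field_simps)
  define p where "p = (m - Fl) / D"
  have mp: "m = Fl + p * D" using D0 by (simp add: p_def)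
  have p1: "(real k - 1) / real n \<le> p"
  proof -
    have "(real k - 1) / real n * D \<le> p * D" using m1 lo mp by linarith
    then show ?thesis using D0 by (rule mult_right_le_imp_le)
  qed
  have p2: "p \<le> real k / real n"
  proof -
    have "p * D \<le> real k / real n * D" using m2 hi mp by linarith
    then show ?thesis using D0 by (rule mult_right_le_imp_le)
  qed
  have "xi n a b k = Phi_inv m"
    by (simp add: xi_def m_def \<alpha>_def \<beta>_def)
  also have "\<dots> = J \<mu> \<sigma> \<tau>l \<tau>u p"
    unfolding J_def mp by (simp add: Fl_def Fu_def D_def)
  finally show ?thesis using p1 p2 by (auto simp: a_def b_def)
qed

end
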